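(* Consider the game among $N$ domains $i = 1,\dots,N$ in which domain $i$ chooses quality $q_i \in [0,1]$ and generality $g_i \in [0,1]$ and receives payoff \[ \pi_i = \alpha_i q_i (1 + \beta g_i) + \lambda \sum_{j \neq i} q_j g_j - \Big(\tfrac{\gamma_q}{2} q_i^2 + \tfrac{\gamma_g}{2} g_i^2 q_i + \kappa g_i\Big), \] with parameters $\alpha_i > 0$, $\beta \ge 0$, $\lambda > 0$, $\gamma_q, \gamma_g > 0$, $\kappa \ge 0$. Let $(q_i^*, g_i^{NE})_{i=1}^N$ be a Nash equilibrium with $q_i^* > 0$ for all $i$. If $\alpha_i \beta < \kappa / q_i^*$ for all domains $i$, then $g_i^{NE} = 0$ for all $i$.
   Context: The model describes an organization with $N$ domain teams producing data products; $q_i$ is the quality and $g_i$ the cross-domain generality of domain $i$'s product. The situation $g_i^{NE}=0$ for all $i$ is called the "data mesh trap". *)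

theory Defs
  imports Complex_Main
begin

text \<open>Domains are indexed by i < N (i.e. 0..N-1). q i = quality, g i = generality.\<close>

definition payoff ::
  "(nat \<Rightarrow> real) \<Rightarrow> real \<Rightarrow> real \<Rightarrow> real \<Rightarrow> real \<Rightarrow> real \<Rightarrow> nat
   \<Rightarrow> (nat \<Rightarrow> real) \<Rightarrow> (nat \<Rightarrow> real) \<Rightarrow> nat \<Rightarrow> real" where
  "payoff \<alpha> \<beta> lam \<gamma>q \<gamma>g \<kappa> N q g i =
     \<alpha> i * q i * (1 + \<beta> * g i) + lam * (\<Sum>j\<in>{..<N} - {i}. q j * g j)
     - (\<gamma>q / 2 * (q i)\<^sup>2 + \<gamma>g / 2 * (g i)\<^sup>2 * q i + \<kappa> * g i)"

definition nash_eq ::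
  "(nat \<Rightarrow> real) \<Rightarrow> real \<Rightarrow> real \<Rightarrow> real \<Rightarrow> real \<Rightarrow> real \<Rightarrow> nat
   \<Rightarrow> (nat \<Rightarrow> real) \<Rightarrow> (nat \<Rightarrow> real) \<Rightarrow> bool" where
  "nash_eq \<alpha> \<beta> lam \<gamma>q \<gamma>g \<kappa> N q g \<longleftrightarrow>
     (\<forall>i<N. q i \<in> {0..1} \<and> g i \<in> {0..1}) \<and>
     (\<forall>i<N. \<forall>x\<in>{0..1}. \<forall>y\<in>{0..1}.
        payoff \<alpha> \<beta> lam \<gamma>q \<gamma>g \<kappa> N (q(i := x)) (g(i := y)) i
          \<le> payoff \<alpha> \<beta> lam \<gamma>q \<gamma>g \<kappa> N q g i)"

end

theory Submission
  imports Defs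
begin

theorem corollary1:
  fixes \<alpha> :: "nat \<Rightarrow> real" and \<beta> lam \<gamma>q \<gamma>g \<kappa> :: real and N :: nat
    and q g :: "nat \<Rightarrow> real"
  assumes "\<forall>i<N. \<alpha> i > 0" and "\<beta> \<ge> 0" and "lam > 0"
    and "\<gamma>q > 0" and "\<gamma>g > 0" and "\<kappa> \<ge> 0"
    and "nash_eq \<alpha> \<beta> lam \<gamma>q \<gamma>g \<kappa> N q g"
    and "\<forall>i<N. q i > 0"
    and "\<forall>i<N. \<alpha> i * \<beta> < \<kappa> / q i"
  shows "\<forall>i<N. g i = 0"
proof (intro allI impI)
  fix i assume i: "i < N"
  have qi: "q i > 0" "q i \<le> 1" "g i \<ge> 0" "g i \<le> 1"
    using assms(7,8) i unfolding nash_eq_def by auto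
  have le: "payoff \<alpha> \<beta> lam \<gamma>q \<gamma>g \<kappa> N (q(i := q i)) (g(i := 0)) i
          \<le> payoff \<alpha> \<beta> lam \<gamma>q \<gamma>g \<kappa> N q g i"
  proof -
    have "\<forall>x\<in>{0..1}. \<forall>y\<in>{0..1}. payoff \<alpha> \<beta> lam \<gamma>q \<gamma>g \<kappa> N (q(i := x)) (g(i := y)) i
          \<le> payoff \<alpha> \<beta> lam \<gamma>q \<gamma>g \<kappa> N q g i"
      using assms(7) i unfolding nash_eq_def by blast
    moreover have "q i \<in> {0..1}" "(0::real) \<in> {0..1}" using qi by auto
    ultimately show ?thesis by blast
  qed
  have s: "(\<Sum>j\<in>{..<N} - {i}. q j * (g(i := 0)) j) = (\<Sum>j\<in>{..<N} - {i}. q j * g j)"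
    by (rule sum.cong) auto
  have ab: "\<alpha> i * \<beta> * q i < \<kappa>"
    using assms(9) i qi by (simp add: less_divide_eq)
  from le s have "\<alpha> i * q i \<le> \<alpha> i * q i * (1 + \<beta> * g i) - (\<gamma>g / 2 * (g i)\<^sup>2 * q i + \<kappa> * g i)"
    unfolding payoff_def by simp
  hence h: "g i * (\<alpha> i * \<beta> * q i - \<kappa>) \<ge> \<gamma>g / 2 * (g i)\<^sup>2 * q i"
    by (simp add: algebra_simps)
  have "\<gamma>g / 2 * (g i)\<^sup>2 * q i \<ge> 0" using assms(5) qi by simp
  show "g i = 0"
  proof (rule ccontr)
    assume "g i \<noteq> 0"
    hence "g i > 0" using qi by simp
    hence "g i * (\<alpha> i * \<beta> * q i - \<kappa>) < 0" using ab by (simp add: mult_pos_neg)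
    thus False using h \<open>\<gamma>g / 2 * (g i)\<^sup>2 * q i \<ge> 0\<close> by linarith
  qed
qed

end
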